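(* Let $X$ be a real $n\times p$ matrix ($p<n$) of full rank with rows $x_1^\top,\dots,x_n^\top$, and define $$\kappa(X)=\max\Big\{|M| : M\subset\{1,\dots,n\},\ \exists\,\theta\in\mathbb{R}^p \text{ with } X\theta\neq 0 \text{ and } x_i^\top\theta=0\ \forall i\in M\Big\}.$$ Let $f\in\mathbb{R}^p$, $e\in\mathbb{R}^n$, $y=Xf+e$, let $F$ be a real matrix with $n$ columns such that $\ker(F)=\operatorname{ran}(X)$, and set $\tilde y=Fy$. If $\|e\|_0\leq (n-\kappa(X)-1)/2$, then $e$ is the unique solution of the problem $$\min_{s\in\mathbb{R}^n}\ \|s\|_0 \quad\text{subject to}\quad Fs=\tilde y.$$
   Context: For $x\in\mathbb{R}^n$, $\|x\|_0$ denotes the number of nonzero components of $x$, i.e. $\|x\|_0=|\{i\in\{1,\dots,n\}: x_i\neq 0\}|$. *)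

theory Defs
  imports "HOL-Analysis.Analysis"
begin

definition l0norm :: "real ^ 'n \<Rightarrow> nat" where
  "l0norm x = card {i. x $ i \<noteq> 0}"

definition kappa :: "real ^ 'p ^ 'n \<Rightarrow> nat" where
  "kappa X = Max {card M | M :: 'n set.
      \<exists>\<theta>. X *v \<theta> \<noteq> 0 \<and> (\<forall>i\<in>M. row i X \<bullet> \<theta> = 0)}"

end

theory Submission
  imports Defs
begin

theorem lemma2p1:
  fixes X :: "real ^ 'p ^ 'n" and F :: "real ^ 'n ^ 'm"
    and f :: "real ^ 'p" and e :: "real ^ 'n"
  assumes "CARD('p) < CARD('n)"
    and "rank X = CARD('p)"
    and "{s. F *v s = 0} = range (\<lambda>\<theta>. X *v \<theta>)"
    and "real (l0norm e) \<le> (real CARD('n) - real (kappa X) - 1) / 2"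
  shows "F *v e = F *v (X *v f + e) \<and>
         (\<forall>s. F *v s = F *v (X *v f + e) \<and> s \<noteq> e \<longrightarrow> l0norm e < l0norm s)"
proof -
  have ker: "F *v (X *v t) = 0" for t
    using assms(3) by blast
  have A: "F *v e = F *v (X *v f + e)"
    by (simp add: matrix_vector_right_distrib ker)
  have B: "l0norm e < l0norm s" if s: "F *v s = F *v (X *v f + e)" "s \<noteq> e" for s
  proof -
    have "F *v (s - e) = 0"
      using s(1) A by (simp add: matrix_vector_mult_diff_distrib)
    then obtain \<theta> where th: "s - e = X *v \<theta>" using assms(3) by blast
    define d where "d = X *v \<theta>"
    have dnz: "d \<noteq> 0" using th s(2) d_def by auto
    define M where "M = {i. d $ i = 0}"
    have rowM: "\<forall>i\<in>M. row i X \<bullet> \<theta> = 0"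
      by (auto simp: M_def d_def matrix_vector_mult_def row_def inner_vec_def)
    have fin: "finite {card M | M :: 'n set.
      \<exists>\<theta>. X *v \<theta> \<noteq> 0 \<and> (\<forall>i\<in>M. row i X \<bullet> \<theta> = 0)}"
    proof (rule finite_subset[of _ "{..CARD('n)}"])
      show "{card M | M :: 'n set.
      \<exists>\<theta>. X *v \<theta> \<noteq> 0 \<and> (\<forall>i\<in>M. row i X \<bullet> \<theta> = 0)} \<subseteq> {..CARD('n)}"
        by (auto intro: card_mono)
    qed auto
    have "card M \<le> kappa X"
      unfolding kappa_def
      apply (rule Max_ge[OF fin])
      using dnz rowM d_def by blast
    have cM: "card (UNIV - M) = CARD('n) - card M"
      by (simp add: card_Diff_subset)
    have sub: "(UNIV - M) - {i. e $ i \<noteq> 0} \<subseteq> {i. s $ i \<noteq> 0}"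
    proof
      fix i assume "i \<in> (UNIV - M) - {i. e $ i \<noteq> 0}"
      then have "d $ i \<noteq> 0" "e $ i = 0" by (auto simp: M_def)
      moreover have "s $ i = e $ i + d $ i" using th d_def
        by (metis add.commute diff_add_cancel vector_add_component)
      ultimately show "i \<in> {i. s $ i \<noteq> 0}" by simp
    qed
    have "card ((UNIV - M) - {i. e $ i \<noteq> 0}) \<le> l0norm s"
      unfolding l0norm_def by (rule card_mono[OF finite sub])
    moreover have "card (UNIV - M) - l0norm e \<le> card ((UNIV - M) - {i. e $ i \<noteq> 0})"
      unfolding l0norm_def by (rule diff_card_le_card_Diff) simp
    moreover have "card M \<le> CARD('n)" by (rule card_mono) auto
    moreover have "2 * l0norm e + kappa X + 1 \<le> CARD('n)"
    proof -
      have "real (2 * l0norm e + kappa X + 1) \<le> real CARD('n)" using assms(4) by simp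
      then show ?thesis by linarith
    qed
    ultimately show ?thesis using \<open>card M \<le> kappa X\<close> cM by linarith
  qed
  show ?thesis using A B by blast
qed

end
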